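(* Let $\widehat{\mathcal T}_\bullet$ be an arbitrary hierarchical mesh on $\widehat\Omega$, and let $E=[0,1]^{I-1}\times\{e\}\times[0,1]^{d-I}$ with $I\in\{1,\dots,d\}$, $e\in\{0,1\}$. Let $\widehat{\mathcal K}^0|_E:=(\widehat{\mathcal K}^0_1,\dots,\widehat{\mathcal K}^0_{I-1},\widehat{\mathcal K}^0_{I+1},\dots,\widehat{\mathcal K}^0_d)$ and $\widehat\Omega^k_\bullet|_E:=\{(s_1,\dots,s_{I-1},s_{I+1},\dots,s_d):(s_1,\dots,s_d)\in\widehat\Omega^k_\bullet\cap E\}$, and let $\widehat{\mathcal H}_\bullet|_E$ be the $(d-1)$-dimensional hierarchical basis for these data. Then, identifying functions on $[0,1]^{d-1}$ with functions on $E$, $\widehat{\mathcal H}_\bullet|_E=\{\widehat\beta|_E:\widehat\beta\in\widehat{\mathcal H}_\bullet,\ \widehat\beta|_E\neq0\}$. Moreover, if $\widehat\beta_1,\widehat\beta_2\in\widehat{\mathcal H}_\bullet$, $\widehat\beta_1\ne\widehat\beta_2$ and $\widehat\beta_1|_E\ne0$, then $\widehat\beta_1|_E\ne\widehat\beta_2|_E$.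
   Context: Parameter domain $\widehat\Omega=(0,1)^d$, $d\ge2$ (for $d-1=1$ the same definitions apply in one dimension). Fix degrees $p_1,\dots,p_d\ge1$. For each $i$ let $\widehat{\mathcal K}^0_i=(t^0_{i,j})_{j=0}^{N^0_i+p_i}$ be a nondecreasing vector in $[0,1]$ whose first $p_i+1$ entries are $0$, last $p_i+1$ entries are $1$, and whose interior knots have multiplicity $\le p_i$. $\widehat{\mathcal K}^{k+1}_i$ arises from $\widehat{\mathcal K}^k_i$ by inserting the midpoint of every nondegenerate knot span once. $\widehat{\mathcal B}^k$ denotes the tensor-product B-splines of degree $(p_1,\dots,p_d)$ for $\widehat{\mathcal K}^k$, and $\widehat{\mathcal T}^k$ the closed cells of level $k$ (nondegenerate boxes $\prod_i[t^k_{i,j_i-1},t^k_{i,j_i}]$). A hierarchical mesh is given by closed sets $[0,1]^d=\widehat\Omega^0_\bullet\supseteq\widehat\Omega^1_\bullet\supseteq\cdots$, each $\widehat\Omega^k_\bullet$ ($k\ge1$) a union of cells of $\widehat{\mathcal T}^{k-1}$, with $\widehat\Omega^M_\bullet=\emptyset$ for some $M$; its hierarchical basis is $\widehat{\mathcal H}_\bullet=\bigcup_k\{\widehat\beta\in\widehat{\mathcal B}^k:{\rm supp}\,\widehat\beta\subseteq\widehat\Omega^k_\bullet,\ {\rm supp}\,\widehat\beta\not\subseteq\widehat\Omega^{k+1}_\bullet\}$. *)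

theory Defs
  imports "HOL-Analysis.Analysis"
begin

(* Points of R^d are modelled as functions nat => real whose coordinates
   with index >= d vanish (coordinates are 0-based: 0,...,d-1). *)
definition carrier_pts :: "nat \<Rightarrow> (nat \<Rightarrow> real) set" where
  "carrier_pts d = {x. \<forall>i\<ge>d. x i = 0}"

definition unit_box :: "nat \<Rightarrow> (nat \<Rightarrow> real) set" where
  "unit_box d = {x \<in> carrier_pts d. \<forall>i<d. 0 \<le> x i \<and> x i \<le> 1}"

definition open_knot_vector :: "nat \<Rightarrow> real list \<Rightarrow> bool" where
  "open_knot_vector p K \<longleftrightarrow>
     sorted K \<and> 2 * (p + 1) \<le> length K \<and>
     take (p + 1) K = replicate (p + 1) 0 \<and>
     drop (length K - (p + 1)) K = replicate (p + 1) 1 \<and>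
     (\<forall>j. p + 1 \<le> j \<and> j < length K - (p + 1) \<longrightarrow> count_list K (K ! j) \<le> p)"

fun refine :: "real list \<Rightarrow> real list" where
  "refine (a # b # rest) =
     (if a < b then a # (a + b) / 2 # refine (b # rest) else a # refine (b # rest))"
| "refine xs = xs"

definition knots_lvl :: "real list \<Rightarrow> nat \<Rightarrow> real list" where
  "knots_lvl K k = (refine ^^ k) K"

(* univariate B-splines by the Cox-de Boor recursion (with x/0 = 0);
   degree-0 functions are indicators of [t_j, t_{j+1}), the last nondegenerate
   span being closed at the right endpoint (so B-splines are left-continuous at 1) *)
fun bspl :: "real list \<Rightarrow> nat \<Rightarrow> nat \<Rightarrow> real \<Rightarrow> real" where
  "bspl T 0 j t =
     (if T ! j \<le> t \<and> (t < T ! (j + 1) \<or> (t = T ! (j + 1) \<and> T ! (j + 1) = last T \<and> T ! j < T ! (j + 1)))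
      then 1 else 0)"
| "bspl T (Suc p) j t =
     (t - T ! j) / (T ! (j + p + 1) - T ! j) * bspl T p j t
   + (T ! (j + p + 2) - t) / (T ! (j + p + 2) - T ! (j + 1)) * bspl T p (j + 1) t"

definition nbsp :: "real list \<Rightarrow> nat \<Rightarrow> nat" where
  "nbsp T p = length T - p - 1"

definition bsplines :: "nat \<Rightarrow> real list list \<Rightarrow> nat list \<Rightarrow> nat \<Rightarrow> ((nat \<Rightarrow> real) \<Rightarrow> real) set" where
  "bsplines d Ks ps k =
     {(\<lambda>x. \<Prod>i<d. bspl (knots_lvl (Ks ! i) k) (ps ! i) (js i) (x i)) | js.
        \<forall>i<d. js i < nbsp (knots_lvl (Ks ! i) k) (ps ! i)}"

definition cells :: "nat \<Rightarrow> real list list \<Rightarrow> nat \<Rightarrow> (nat \<Rightarrow> real) set set" where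
  "cells d Ks k =
     {{x \<in> carrier_pts d. \<forall>i<d. knots_lvl (Ks ! i) k ! (js i) \<le> x i \<and>
                                 x i \<le> knots_lvl (Ks ! i) k ! (js i + 1)} | js.
        \<forall>i<d. js i + 1 < length (knots_lvl (Ks ! i) k) \<and>
              knots_lvl (Ks ! i) k ! (js i) < knots_lvl (Ks ! i) k ! (js i + 1)}"

definition supp :: "nat \<Rightarrow> ((nat \<Rightarrow> real) \<Rightarrow> real) \<Rightarrow> (nat \<Rightarrow> real) set" where
  "supp d f = closure {x \<in> carrier_pts d. f x \<noteq> 0}"

definition hier_mesh :: "nat \<Rightarrow> real list list \<Rightarrow> (nat \<Rightarrow> (nat \<Rightarrow> real) set) \<Rightarrow> bool" where
  "hier_mesh d Ks \<Omega> \<longleftrightarrow>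
     \<Omega> 0 = unit_box d \<and> (\<forall>k. \<Omega> (Suc k) \<subseteq> \<Omega> k) \<and>
     (\<forall>k. \<exists>C \<subseteq> cells d Ks k. \<Omega> (Suc k) = \<Union>C) \<and>
     (\<exists>M. \<Omega> M = {})"

definition hier_basis :: "nat \<Rightarrow> real list list \<Rightarrow> nat list \<Rightarrow> (nat \<Rightarrow> (nat \<Rightarrow> real) set)
                          \<Rightarrow> ((nat \<Rightarrow> real) \<Rightarrow> real) set" where
  "hier_basis d Ks ps \<Omega> =
     (\<Union>k. {\<beta> \<in> bsplines d Ks ps k. supp d \<beta> \<subseteq> \<Omega> k \<and> \<not> supp d \<beta> \<subseteq> \<Omega> (Suc k)})"

definition del_nth :: "nat \<Rightarrow> 'a list \<Rightarrow> 'a list" where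
  "del_nth I xs = take I xs @ drop (Suc I) xs"

definition drop_coord :: "nat \<Rightarrow> (nat \<Rightarrow> real) \<Rightarrow> (nat \<Rightarrow> real)" where
  "drop_coord I x = (\<lambda>i. if i < I then x i else x (Suc i))"

definition ins_coord :: "nat \<Rightarrow> real \<Rightarrow> (nat \<Rightarrow> real) \<Rightarrow> (nat \<Rightarrow> real)" where
  "ins_coord I e y = (\<lambda>i. if i < I then y i else if i = I then e else y (i - 1))"

definition restr_set :: "nat \<Rightarrow> real \<Rightarrow> (nat \<Rightarrow> real) set \<Rightarrow> (nat \<Rightarrow> real) set" where
  "restr_set I e A = drop_coord I ` {x \<in> A. x I = e}"

definition restr_fun :: "nat \<Rightarrow> real \<Rightarrow> ((nat \<Rightarrow> real) \<Rightarrow> real) \<Rightarrow> ((nat \<Rightarrow> real) \<Rightarrow> real)" where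
  "restr_fun I e f = (\<lambda>y. f (ins_coord I e y))"

end

theory Submission
  imports Defs
begin


definition psi :: "nat \<Rightarrow> real \<times> (nat \<Rightarrow> real) \<Rightarrow> (nat \<Rightarrow> real)" where
  "psi I p = ins_coord I (fst p) (snd p)"
definition phi :: "nat \<Rightarrow> (nat \<Rightarrow> real) \<Rightarrow> real \<times> (nat \<Rightarrow> real)" where
  "phi I x = (x I, drop_coord I x)"

lemma psi_phi: "psi I (phi I x) = x"
  by (auto simp: psi_def phi_def ins_coord_def drop_coord_def fun_eq_iff)
lemma phi_psi: "phi I (psi I p) = p"
  by (cases p) (auto simp: psi_def phi_def ins_coord_def drop_coord_def fun_eq_iff)

lemma cont_coord: "continuous_on UNIV (\<lambda>x::nat\<Rightarrow>real. x i)"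
  by (rule continuous_on_product_coordinates)

lemma cont_phi: "continuous_on UNIV (phi I)"
  unfolding phi_def
proof (rule continuous_on_Pair)
  show "continuous_on UNIV (\<lambda>x::nat\<Rightarrow>real. x I)" by (rule cont_coord)
  show "continuous_on UNIV (drop_coord I)"
  proof (rule continuous_on_coordinatewise_then_product)
    fix i show "continuous_on UNIV (\<lambda>x. drop_coord I x i)"
      unfolding drop_coord_def by (cases "i < I") (simp_all add: cont_coord)
  qed
qed

lemma cont_snd_coord: "continuous_on UNIV (\<lambda>p::real \<times> (nat\<Rightarrow>real). snd p j)"
proof -
  have "continuous_on UNIV ((\<lambda>x::nat\<Rightarrow>real. x j) \<circ> snd)"
    by (rule continuous_on_compose) (auto intro: continuous_on_snd continuous_on_id
         continuous_on_subset[OF cont_coord])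
  then show ?thesis by (simp add: o_def)
qed

lemma cont_psi: "continuous_on UNIV (psi I)"
proof (rule continuous_on_coordinatewise_then_product)
  fix i
  show "continuous_on UNIV (\<lambda>x. psi I x i)"
  proof (cases "i < I")
    case True then show ?thesis unfolding psi_def ins_coord_def by (simp add: cont_snd_coord)
  next
    case False
    show ?thesis
    proof (cases "i = I")
      case True then show ?thesis unfolding psi_def ins_coord_def by (simp add: continuous_on_fst continuous_on_id)
    next
      case F: False
      then show ?thesis using False unfolding psi_def ins_coord_def by (simp add: cont_snd_coord)
    qed
  qed
qed

lemma closure_psi: "closure (psi I ` B) = psi I ` closure B"
proof
  have "psi I ` closure B = phi I -` closure B"
  proof (rule set_eqI)
    fix x show "x \<in> psi I ` closure B \<longleftrightarrow> x \<in> phi I -` closure B"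
    proof
      assume "x \<in> psi I ` closure B"
      then obtain b where "b \<in> closure B" "x = psi I b" by blast
      then show "x \<in> phi I -` closure B" by (simp add: phi_psi)
    next
      assume "x \<in> phi I -` closure B"
      then have "psi I (phi I x) \<in> psi I ` closure B" by blast
      then show "x \<in> psi I ` closure B" by (simp add: psi_phi)
    qed
  qed
  moreover have "closed (phi I -` closure B)"
    by (rule closed_vimage[OF closed_closure cont_phi])
  ultimately show "closure (psi I ` B) \<subseteq> psi I ` closure B"
    by (metis closure_minimal closure_subset image_mono)
  show "psi I ` closure B \<subseteq> closure (psi I ` B)"
  proof (rule image_closure_subset)
    show "continuous_on (closure B) (psi I)" by (rule continuous_on_subset[OF cont_psi]) simp
    show "psi I ` B \<subseteq> closure (psi I ` B)" by (rule closure_subset)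
  qed simp
qed


lemma carrier_drop: "I < d \<Longrightarrow> (x \<in> carrier_pts d \<longleftrightarrow> drop_coord I x \<in> carrier_pts (d - 1))"
  unfolding carrier_pts_def drop_coord_def
proof safe
  fix i assume "I < d" "\<forall>i\<ge>d. x i = 0" "d - 1 \<le> i"
  then show "(if i < I then x i else x (Suc i)) = 0" by auto
next
  fix i assume a: "I < d" "\<forall>i\<ge>d - 1. (if i < I then x i else x (Suc i)) = 0" "d \<le> i"
  moreover have "d - 1 \<le> i - 1" using a by simp
  ultimately have "(if i - 1 < I then x (i - 1) else x (Suc (i - 1))) = 0" by blast
  moreover have "\<not> i - 1 < I" "Suc (i - 1) = i" using a by auto
  ultimately have "x (Suc (i - 1)) = 0" by simp
  then show "x i = 0" using \<open>Suc (i - 1) = i\<close> by simp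
qed

lemma closed_carrier: "closed (carrier_pts d)"
proof -
  have "carrier_pts d = (\<Inter>i\<in>{d..}. (\<lambda>x. x i) -` {0})" unfolding carrier_pts_def by auto
  then show ?thesis by (auto intro!: closed_INT closed_vimage)
qed

lemma supp_carrier: "supp d f \<subseteq> carrier_pts d"
  unfolding supp_def by (rule closure_minimal) (auto simp: closed_carrier)

lemma psi_image_Times: "psi I ` (A \<times> B) = {x. x I \<in> A \<and> drop_coord I x \<in> B}"
proof safe
  fix x assume "x I \<in> A" "drop_coord I x \<in> B"
  then show "x \<in> psi I ` (A \<times> B)" using psi_phi[of I x] by (metis SigmaI image_eqI phi_def)
next
  fix a b assume "a \<in> A" "b \<in> B"
  have "drop_coord I (psi I (a, b)) = b" using phi_psi[of I "(a,b)"] by (simp add: phi_def)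
  then show "drop_coord I (psi I (a, b)) \<in> B" using \<open>b \<in> B\<close> by simp
qed (auto simp: psi_def ins_coord_def)

lemma supp_split:
  assumes "I < d" and "\<And>x. \<beta> x = f (x I) * \<gamma> (drop_coord I x)"
  shows "supp d \<beta> = {x. x I \<in> closure {t. f t \<noteq> 0} \<and> drop_coord I x \<in> supp (d - 1) \<gamma>}"
proof -
  have "{x \<in> carrier_pts d. \<beta> x \<noteq> 0} = psi I ` ({t. f t \<noteq> 0} \<times> {y \<in> carrier_pts (d - 1). \<gamma> y \<noteq> 0})"
    unfolding psi_image_Times using carrier_drop[OF assms(1)] assms(2) by auto
  then have "supp d \<beta> = psi I ` (closure {t. f t \<noteq> 0} \<times> supp (d - 1) \<gamma>)"
    unfolding supp_def by (simp add: closure_psi closure_Times)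
  then show ?thesis by (simp add: psi_image_Times)
qed



definition good :: "nat \<Rightarrow> real list \<Rightarrow> bool" where
  "good p T \<longleftrightarrow> sorted T \<and> set T \<subseteq> {0..1} \<and> count_list T 0 = p + 1 \<and> count_list T 1 = p + 1"

lemma count_card: "count_list T c = card {j. j < length T \<and> T ! j = c}"
  by (simp add: count_list_eq_length_filter length_filter_conv_card eq_commute)

lemma count_ge: "(\<And>j. j \<in> S \<Longrightarrow> j < length T \<and> T ! j = c) \<Longrightarrow> card S \<le> count_list T c"
  unfolding count_card by (rule card_mono) auto

lemma count_le_A: assumes "sorted T" "i < length T" "c < T ! i" shows "count_list T c \<le> i"
proof -
  have "{j. j < length T \<and> T ! j = c} \<subseteq> {..<i}"
  proof -
    { fix j assume j: "j < length T" "T ! j = c" "\<not> j < i"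
      then have "T ! i \<le> T ! j" using assms sorted_nth_mono[of T i j] by simp
      then have False using assms j by simp }
    then show ?thesis by force
  qed
  then show ?thesis unfolding count_card by (metis card_lessThan card_mono finite_lessThan)
qed

lemma count_le_B: assumes "sorted T" "i < length T" "T ! i < c" shows "count_list T c \<le> length T - Suc i"
proof -
  have "{j. j < length T \<and> T ! j = c} \<subseteq> {Suc i..<length T}"
  proof -
    { fix j assume j: "j < length T" "T ! j = c" "\<not> Suc i \<le> j"
      then have "T ! j \<le> T ! i" using assms sorted_nth_mono[of T j i] by simp
      then have False using assms j by simp }
    then show ?thesis by force
  qed
  then show ?thesis unfolding count_card by (metis card_atLeastLessThan card_mono finite_atLeastLessThan)
qed

lemma count_two: "a \<noteq> b \<Longrightarrow> count_list T a + count_list T b \<le> length T"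
  by (induction T) auto

context
  fixes p T assumes g: "good p T"
begin

lemma g_sorted: "sorted T" using g by (simp add: good_def)
lemma g_set: "x \<in> set T \<Longrightarrow> 0 \<le> x \<and> x \<le> 1" using g by (auto simp: good_def)
lemma g_nth: "i < length T \<Longrightarrow> 0 \<le> T ! i \<and> T ! i \<le> 1" using g_set by simp
lemma g_len: "2 * p + 2 \<le> length T"
  using count_two[of 0 1 T] g by (simp add: good_def)

lemma g1: "i \<le> p \<Longrightarrow> T ! i = 0"
proof (rule ccontr)
  assume "i \<le> p" "T ! i \<noteq> 0"
  moreover have "i < length T" using g_len \<open>i \<le> p\<close> by simp
  ultimately have "0 < T ! i" using g_nth by force
  then have "count_list T 0 \<le> i" using count_le_A[OF g_sorted] \<open>i < length T\<close> by blast
  then show False using g \<open>i \<le> p\<close> by (simp add: good_def)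
qed

lemma g3: "i < length T \<Longrightarrow> length T - Suc p \<le> i \<Longrightarrow> T ! i = 1"
proof (rule ccontr)
  assume a: "i < length T" "length T - Suc p \<le> i" "T ! i \<noteq> 1"
  then have "T ! i < 1" using g_nth by force
  then have "count_list T 1 \<le> length T - Suc i" using count_le_B[OF g_sorted] a by blast
  then show False using g a by (simp add: good_def)
qed

lemma g2: "0 < T ! Suc p"
proof (rule ccontr)
  assume "\<not> 0 < T ! Suc p"
  moreover have "Suc p < length T" using g_len by simp
  ultimately have z: "T ! Suc p = 0" using g_nth[of "Suc p"] by linarith
  have "card {..Suc p} \<le> count_list T 0"
    by (rule count_ge) (use z g1 g_len in \<open>auto simp: le_Suc_eq\<close>)
  then show False using g by (simp add: good_def)
qed

lemma g4: "T ! (length T - Suc (Suc p)) < 1"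
proof (rule ccontr)
  assume "\<not> T ! (length T - Suc (Suc p)) < 1"
  moreover have "length T - Suc (Suc p) < length T" using g_len by simp
  ultimately have z: "T ! (length T - Suc (Suc p)) = 1" using g_nth[of "length T - Suc (Suc p)"] by linarith
  have "card {length T - Suc (Suc p)..<length T} \<le> count_list T 1"
  proof (rule count_ge)
    fix j assume j: "j \<in> {length T - Suc (Suc p)..<length T}"
    show "j < length T \<and> T ! j = 1"
    proof (cases "j = length T - Suc (Suc p)")
      case True then show ?thesis using z g_len by auto
    next
      case False then show ?thesis using j g3 by auto
    qed
  qed
  then show False using g g_len by (simp add: good_def)
qed

lemma g5: "x \<in> set T \<Longrightarrow> 0 < x \<Longrightarrow> T ! Suc p \<le> x"
proof -
  assume "x \<in> set T" "0 < x"
  then obtain i where i: "i < length T" "T ! i = x" by (auto simp: in_set_conv_nth)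
  then have "\<not> i \<le> p" using g1 \<open>0 < x\<close> by auto
  then have "Suc p \<le> i" by simp
  then show ?thesis using i g_sorted sorted_nth_mono[of T "Suc p" i] by simp
qed

lemma g6: "x \<in> set T \<Longrightarrow> x < 1 \<Longrightarrow> x \<le> T ! (length T - Suc (Suc p))"
proof -
  assume "x \<in> set T" "x < 1"
  then obtain i where i: "i < length T" "T ! i = x" by (auto simp: in_set_conv_nth)
  then have "i \<le> length T - Suc (Suc p)" using g3[of i] \<open>x < 1\<close> by (cases "length T - Suc p \<le> i") auto
  moreover have "length T - Suc (Suc p) < length T" using g_len by simp
  ultimately show ?thesis using i g_sorted sorted_nth_mono[of T i "length T - Suc (Suc p)"] by simp
qed

lemma g_last: "last T = 1"
proof -
  have "T \<noteq> []" using g_len by auto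
  then show ?thesis using g3[of "length T - 1"] g_len by (simp add: last_conv_nth)
qed

end



lemma refine_Cons: "\<exists>ys. refine (b # rest) = b # ys"
  by (cases rest) auto

lemma set_refine_sub: "x \<in> set (refine xs) \<Longrightarrow> x \<in> set xs \<or> (\<exists>a\<in>set xs. \<exists>b\<in>set xs. a < b \<and> x = (a + b) / 2)"
  by (induction xs rule: refine.induct) (auto split: if_splits)

lemma set_refine_sup: "set xs \<subseteq> set (refine xs)"
  by (induction xs rule: refine.induct) auto

lemma refine_in01: "set xs \<subseteq> {0..1} \<Longrightarrow> set (refine xs) \<subseteq> {0..1}"
  using set_refine_sub by fastforce

lemma count_refine: "set xs \<subseteq> {0..1} \<Longrightarrow> c = 0 \<or> c = 1 \<Longrightarrow> count_list (refine xs) c = count_list xs c"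
  by (induction xs rule: refine.induct) auto

lemma sorted_refine: "sorted xs \<Longrightarrow> sorted (refine xs)"
proof (induction xs rule: refine.induct)
  case (1 a b rest)
  have s: "sorted (refine (b # rest))" using 1 by (cases "a < b") auto
  have ge: "\<forall>y\<in>set (refine (b # rest)). b \<le> y"
  proof
    fix y assume "y \<in> set (refine (b # rest))"
    from set_refine_sub[OF this] 1(3) show "b \<le> y" by auto
  qed
  have ab: "a \<le> b" using 1(3) by simp
  show ?case using s ge ab by (auto simp: sorted_simps)
qed auto

lemma good_refine: "good p T \<Longrightarrow> good p (refine T)"
  unfolding good_def using sorted_refine refine_in01 count_refine by auto

lemma knots_lvl_Suc: "knots_lvl K (Suc k) = refine (knots_lvl K k)"
  by (simp add: knots_lvl_def)

lemma good_lvl: "good p K \<Longrightarrow> good p (knots_lvl K k)"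
  by (induction k) (auto simp: knots_lvl_Suc good_refine knots_lvl_def)

lemma set_lvl_mono: "m \<le> k \<Longrightarrow> set (knots_lvl K m) \<subseteq> set (knots_lvl K k)"
proof (induction k)
  case (Suc k) then show ?case
    using set_refine_sup[of "knots_lvl K k"] by (auto simp: knots_lvl_Suc le_Suc_eq)
qed simp

lemma good_init: assumes "open_knot_vector p K" shows "good p K"
proof -
  let ?L = "length K"
  have s: "sorted K" and len: "2 * (p + 1) \<le> ?L"
    and tk: "take (p + 1) K = replicate (p + 1) 0"
    and dr: "drop (?L - (p + 1)) K = replicate (p + 1) 1"
    and mul: "\<And>j. p + 1 \<le> j \<Longrightarrow> j < ?L - (p + 1) \<Longrightarrow> count_list K (K ! j) \<le> p"
    using assms unfolding open_knot_vector_def by auto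
  have z: "j \<le> p \<Longrightarrow> K ! j = 0" for j
  proof -
    assume "j \<le> p"
    then have "take (p + 1) K ! j = 0" using arg_cong[OF tk, of "\<lambda>xs. xs ! j"] by (simp del: replicate_Suc)
    then show ?thesis using \<open>j \<le> p\<close> by simp
  qed
  have o: "?L - (p + 1) \<le> j \<Longrightarrow> j < ?L \<Longrightarrow> K ! j = 1" for j
  proof -
    assume a: "?L - (p + 1) \<le> j" "j < ?L"
    then have "drop (?L - (p + 1)) K ! (j - (?L - (p + 1))) = 1"
      using arg_cong[OF dr, of "\<lambda>xs. xs ! (j - (?L - (p + 1)))"] len by (simp del: replicate_Suc)
    then show ?thesis using a len by simp
  qed
  have rng: "0 \<le> K ! j \<and> K ! j \<le> 1" if "j < ?L" for j
  proof -
    have "K ! 0 \<le> K ! j" using s that sorted_nth_mono[of K 0 j] by simp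
    moreover have "K ! j \<le> K ! (?L - 1)" using s that sorted_nth_mono[of K j "?L - 1"] by simp
    ultimately show ?thesis using z[of 0] o[of "?L - 1"] len by simp
  qed
  have set01: "set K \<subseteq> {0..1}" using rng by (auto simp: in_set_conv_nth)
  have c0: "count_list K 0 = p + 1"
  proof -
    have "{j. j < ?L \<and> K ! j = 0} = {..<p + 1}"
    proof (rule set_eqI, rule iffI)
      fix j assume "j \<in> {j. j < ?L \<and> K ! j = 0}"
      then have j: "j < ?L" "K ! j = 0" by auto
      show "j \<in> {..<p + 1}"
      proof (rule ccontr)
        assume nj: "j \<notin> {..<p + 1}"
        have "j < ?L - (p + 1)" using o[of j] j by (cases "?L - (p + 1) \<le> j") auto
        then have "count_list K 0 \<le> p" using mul[of j] nj j by auto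
        moreover have "card (insert j {..<p + 1}) \<le> count_list K 0"
          by (rule count_ge) (use j z len in auto)
        ultimately show False using nj by simp
      qed
    next
      fix j assume "j \<in> {..<p + 1}" then show "j \<in> {j. j < ?L \<and> K ! j = 0}" using z len by auto
    qed
    then show ?thesis unfolding count_card by simp
  qed
  have c1: "count_list K 1 = p + 1"
  proof -
    have "{j. j < ?L \<and> K ! j = 1} = {?L - (p + 1)..<?L}"
    proof (rule set_eqI, rule iffI)
      fix j assume "j \<in> {j. j < ?L \<and> K ! j = 1}"
      then have j: "j < ?L" "K ! j = 1" by auto
      show "j \<in> {?L - (p + 1)..<?L}"
      proof (rule ccontr)
        assume nj: "j \<notin> {?L - (p + 1)..<?L}"
        have "\<not> j \<le> p" using z[of j] j by auto
        then have "count_list K 1 \<le> p" using mul[of j] nj j by auto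
        moreover have "card (insert j {?L - (p + 1)..<?L}) \<le> count_list K 1"
          by (rule count_ge) (use j o len in auto)
        ultimately show False using nj len by simp
      qed
    next
      fix j assume "j \<in> {?L - (p + 1)..<?L}" then show "j \<in> {j. j < ?L \<and> K ! j = 1}" using o len by auto
    qed
    then show ?thesis unfolding count_card using len by simp
  qed
  show ?thesis unfolding good_def using s set01 c0 c1 by simp
qed



lemma bspl_zero_outside:
  "sorted T \<Longrightarrow> j + q + 1 < length T \<Longrightarrow> t < T ! j \<or> T ! (j + q + 1) < t \<Longrightarrow> bspl T q j t = 0"
proof (induction q arbitrary: j)
  case 0 then show ?case by auto
next
  case (Suc q)
  have m1: "T ! j \<le> T ! (j + 1)" "T ! (j + q + 1) \<le> T ! (j + q + 2)"
    using Suc.prems sorted_nth_mono[OF Suc.prems(1), of j "j+1"]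
      sorted_nth_mono[OF Suc.prems(1), of "j+q+1" "j+q+2"] by auto
  have m2: "T ! j \<le> T ! (j + q + 1)"  "T ! (j + 1) \<le> T ! (j + q + 2)"
    using Suc.prems sorted_nth_mono[OF Suc.prems(1), of j "j+q+1"]
      sorted_nth_mono[OF Suc.prems(1), of "j+1" "j+q+2"] by auto
  have "bspl T q j t = 0"
    by (rule Suc.IH) (use Suc.prems m1 m2 in auto)
  moreover have "bspl T q (j + 1) t = 0"
    by (rule Suc.IH) (use Suc.prems m1 m2 in \<open>auto simp: add.assoc\<close>)
  ultimately show ?case by simp
qed

context fixes p T assumes g: "good p T"
begin

lemma pos_after: "Suc p \<le> j \<Longrightarrow> j < length T \<Longrightarrow> 0 < T ! j"
  using g2[OF g] g_sorted[OF g] sorted_nth_mono[of T "Suc p" j] by simp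

lemma lt1_before: "j \<le> length T - Suc (Suc p) \<Longrightarrow> T ! j < 1"
proof -
  assume j: "j \<le> length T - Suc (Suc p)"
  have "length T - Suc (Suc p) < length T" using g_len[OF g] by simp
  then have "T ! j \<le> T ! (length T - Suc (Suc p))" using j g_sorted[OF g] sorted_nth_mono by blast
  then show ?thesis using g4[OF g] by linarith
qed

lemma bspl_at0: "q \<le> p \<Longrightarrow> j + q + 1 < length T \<Longrightarrow> bspl T q j 0 = (if j + q = p then 1 else 0)"
proof (induction q arbitrary: j)
  case 0
  have l: "last T = 1" by (rule g_last[OF g])
  have a: "T ! j \<le> 0 \<longleftrightarrow> j \<le> p" using g1[OF g, of j] pos_after[of j] 0 by force
  have b: "0 < T ! (j + 1) \<longleftrightarrow> p < j + 1" using g1[OF g, of "j+1"] pos_after[of "j+1"] 0 by force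
  show ?case using a b l by auto
next
  case (Suc q)
  have IH1: "bspl T q j 0 = (if j + q = p then 1 else 0)" using Suc by simp
  have IH2: "bspl T q (j + 1) 0 = (if j + 1 + q = p then 1 else 0)" using Suc by simp
  have e: "bspl T (Suc q) j 0 = (0 - T ! j) / (T ! (j + q + 1) - T ! j) * bspl T q j 0
        + (T ! (j + q + 2) - 0) / (T ! (j + q + 2) - T ! (j + 1)) * bspl T q (j + 1) 0" by simp
  show ?case
  proof (cases "j + q = p")
    case True
    then have "T ! j = 0" using g1[OF g] by simp
    then show ?thesis using e IH1 IH2 True by simp
  next
    case False
    show ?thesis
    proof (cases "j + 1 + q = p")
      case True
      then have "T ! (j + 1) = 0" using g1[OF g] by simp
      moreover have "0 < T ! (j + q + 2)" using pos_after[of "j + q + 2"] True Suc.prems by simp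
      ultimately show ?thesis using e IH1 IH2 True False by simp
    next
      case F2: False
      then show ?thesis using e IH1 IH2 False by simp
    qed
  qed
qed

lemma bspl_at1: "q \<le> p \<Longrightarrow> j + q + 1 < length T \<Longrightarrow> bspl T q j 1 = (if j = length T - Suc (Suc p) then 1 else 0)"
proof (induction q arbitrary: j)
  case 0
  have l: "last T = 1" by (rule g_last[OF g])
  have a: "T ! j \<le> 1" using g_nth[OF g, of j] 0 by simp
  have b: "\<not> 1 < T ! (j + 1)" using g_nth[OF g, of "j+1"] 0 by simp
  have c: "T ! (j + 1) = 1 \<longleftrightarrow> length T - Suc p \<le> j + 1"
    using g3[OF g, of "j+1"] lt1_before[of "j+1"] 0 by force
  have d: "T ! j < 1 \<longleftrightarrow> j \<le> length T - Suc (Suc p)"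
    using g3[OF g, of "j"] lt1_before[of "j"] 0 by force
  have cd: "(T ! (j + 1) = 1 \<and> T ! j < 1) \<longleftrightarrow> j = length T - Suc (Suc p)"
    using c d g_len[OF g] by auto
  show ?case
  proof (cases "j = length T - Suc (Suc p)")
    case True
    then have "T ! (j + 1) = 1" "T ! j < 1" using cd by auto
    then show ?thesis using True l by simp
  next
    case False
    then have "\<not> (T ! (j + 1) = 1 \<and> T ! j < 1)" using cd by blast
    then show ?thesis using False b l by auto
  qed
next
  case (Suc q)
  let ?m = "length T - Suc (Suc p)"
  have IH1: "bspl T q j 1 = (if j = ?m then 1 else 0)" using Suc by simp
  have IH2: "bspl T q (j + 1) 1 = (if j + 1 = ?m then 1 else 0)" using Suc by simp
  have e: "bspl T (Suc q) j 1 = (1 - T ! j) / (T ! (j + q + 1) - T ! j) * bspl T q j 1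
        + (T ! (j + q + 2) - 1) / (T ! (j + q + 2) - T ! (j + 1)) * bspl T q (j + 1) 1" by simp
  show ?case
  proof (cases "j = ?m")
    case True
    then have "T ! j < 1" using lt1_before by simp
    moreover have "T ! (j + q + 1) = 1" using g3[OF g, of "j + q + 1"] True Suc.prems g_len[OF g] by simp
    ultimately show ?thesis using e IH1 IH2 True by simp
  next
    case False
    show ?thesis
    proof (cases "j + 1 = ?m")
      case True
      have "T ! (j + q + 2) = 1" using g3[OF g, of "j + q + 2"] True Suc.prems g_len[OF g] by simp
      then show ?thesis using e IH1 IH2 True False by simp
    next
      case F2: False
      then show ?thesis using e IH1 IH2 False by simp
    qed
  qed
qed

end


definition sh :: "nat \<Rightarrow> nat \<Rightarrow> nat" where "sh I i = (if i < I then i else Suc i)"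

definition tpf :: "nat \<Rightarrow> real list list \<Rightarrow> nat list \<Rightarrow> nat \<Rightarrow> (nat \<Rightarrow> nat) \<Rightarrow> (nat \<Rightarrow> real) \<Rightarrow> real" where
  "tpf d Ks ps k js = (\<lambda>x. \<Prod>i<d. bspl (knots_lvl (Ks ! i) k) (ps ! i) (js i) (x i))"

definition ext :: "nat \<Rightarrow> nat \<Rightarrow> (nat \<Rightarrow> nat) \<Rightarrow> nat \<Rightarrow> nat" where
  "ext I b js' = (\<lambda>i. if i < I then js' i else if i = I then b else js' (i - 1))"

lemma ext_sh: "ext I b js' \<circ> sh I = js'" by (auto simp: ext_def sh_def fun_eq_iff)
lemma ext_I: "ext I b js' I = b" by (simp add: ext_def)

lemma bsplines_tpf: "bsplines d Ks ps k = {tpf d Ks ps k js | js. \<forall>i<d. js i < nbsp (knots_lvl (Ks ! i) k) (ps ! i)}"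
  by (simp add: bsplines_def tpf_def)

lemma del_nth_len: "I < length xs \<Longrightarrow> length (del_nth I xs) = length xs - 1"
  by (simp add: del_nth_def)

lemma del_nth_nth: "I < length xs \<Longrightarrow> i < length xs - 1 \<Longrightarrow> del_nth I xs ! i = xs ! sh I i"
  by (auto simp: del_nth_def sh_def nth_append min_def)

lemma sh_lt: "I < d \<Longrightarrow> i < d - 1 \<Longrightarrow> sh I i < d" by (auto simp: sh_def)
lemma sh_ne: "sh I i \<noteq> I" by (auto simp: sh_def)

lemma prod_split: assumes "I < d" shows "(\<Prod>i<d. h i) = h I * (\<Prod>i<d - 1. h (sh I i))"
proof -
  have inj: "inj_on (sh I) {..<d - 1}" by (auto simp: inj_on_def sh_def split: if_splits)
  have img: "sh I ` {..<d - 1} = {..<d} - {I}"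
  proof (rule set_eqI, rule iffI)
    fix i assume "i \<in> {..<d} - {I}"
    then have "i = sh I (if i < I then i else i - 1)" "(if i < I then i else i - 1) \<in> {..<d - 1}"
      using assms by (auto simp: sh_def)
    then show "i \<in> sh I ` {..<d - 1}" by blast
  qed (use assms in \<open>auto simp: sh_def\<close>)
  have "(\<Prod>i<d. h i) = h I * (\<Prod>i\<in>{..<d} - {I}. h i)"
    using assms by (simp add: prod.remove)
  also have "(\<Prod>i\<in>{..<d} - {I}. h i) = (\<Prod>i<d - 1. h (sh I i))"
    using prod.reindex[OF inj, of h] img by simp
  finally show ?thesis .
qed

lemma drop_coord_sh: "drop_coord I x i = x (sh I i)" by (simp add: drop_coord_def sh_def)

lemma tpf_decomp:
  assumes "I < d" "length Ks = d" "length ps = d"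
  shows "tpf d Ks ps k js x = bspl (knots_lvl (Ks ! I) k) (ps ! I) (js I) (x I)
           * tpf (d - 1) (del_nth I Ks) (del_nth I ps) k (js \<circ> sh I) (drop_coord I x)"
proof -
  have "(\<Prod>i<d - 1. bspl (knots_lvl (Ks ! sh I i) k) (ps ! sh I i) (js (sh I i)) (x (sh I i)))
      = (\<Prod>i<d - 1. bspl (knots_lvl (del_nth I Ks ! i) k) (del_nth I ps ! i) (js (sh I i)) (x (sh I i)))"
    by (rule prod.cong) (use assms in \<open>auto simp: del_nth_nth\<close>)
  then show ?thesis unfolding tpf_def by (simp add: prod_split[OF assms(1)] drop_coord_sh)
qed

lemma drop_ins: "drop_coord I (ins_coord I e y) = y"
  by (auto simp: drop_coord_def ins_coord_def fun_eq_iff)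
lemma ins_I: "ins_coord I e y I = e" by (simp add: ins_coord_def)

lemma restr_tpf:
  assumes "I < d" "length Ks = d" "length ps = d"
  shows "restr_fun I e (tpf d Ks ps k js) = (\<lambda>y. bspl (knots_lvl (Ks ! I) k) (ps ! I) (js I) e
           * tpf (d - 1) (del_nth I Ks) (del_nth I ps) k (js \<circ> sh I) y)"
  unfolding restr_fun_def by (simp add: tpf_decomp[OF assms] drop_ins ins_I)

lemma supp_zero: "supp d (\<lambda>_. 0) = {}" by (simp add: supp_def)

lemma supp_equiv_abs:
  assumes "I < d" "\<Omega>' \<subseteq> carrier_pts d" "\<forall>x\<in>carrier_pts d. x(I := e) \<in> \<Omega>' \<and> x I \<in> A \<longrightarrow> x \<in> \<Omega>'"
    "S \<subseteq> A" "e \<in> S" "G \<subseteq> carrier_pts (d - 1)"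
  shows "{x. x I \<in> S \<and> drop_coord I x \<in> G} \<subseteq> \<Omega>' \<longleftrightarrow> G \<subseteq> restr_set I e \<Omega>'"
proof
  assume a: "{x. x I \<in> S \<and> drop_coord I x \<in> G} \<subseteq> \<Omega>'"
  show "G \<subseteq> restr_set I e \<Omega>'"
  proof
    fix y assume "y \<in> G"
    then have "ins_coord I e y \<in> {x. x I \<in> S \<and> drop_coord I x \<in> G}"
      using assms(5) by (simp add: drop_ins ins_I)
    then have "ins_coord I e y \<in> \<Omega>'" using a by blast
    then show "y \<in> restr_set I e \<Omega>'" unfolding restr_set_def
      by (intro image_eqI[of _ _ "ins_coord I e y"]) (simp_all add: drop_ins ins_I)
  qed
next
  assume a: "G \<subseteq> restr_set I e \<Omega>'"
  show "{x. x I \<in> S \<and> drop_coord I x \<in> G} \<subseteq> \<Omega>'"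
  proof (rule subsetI)
    fix x assume "x \<in> {x. x I \<in> S \<and> drop_coord I x \<in> G}"
    then have x: "x I \<in> S" "drop_coord I x \<in> G" by auto
    then have "drop_coord I x \<in> drop_coord I ` {x \<in> \<Omega>'. x I = e}"
      using a x(2) unfolding restr_set_def by blast
    then obtain z where z: "z \<in> \<Omega>'" "z I = e" "drop_coord I z = drop_coord I x"
      by (auto simp: image_iff)
    have "drop_coord I x \<in> carrier_pts (d - 1)" using x assms(6) by blast
    then have xc: "x \<in> carrier_pts d" using carrier_drop[OF assms(1)] by blast
    have "x(I := e) = z"
    proof
      fix i show "(x(I := e)) i = z i"
      proof (cases "i = I")
        case True then show ?thesis using z by simp
      next
        case False
        show ?thesis
        proof (cases "i < I")
          case True
          then show ?thesis using fun_cong[OF z(3), of i] False by (simp add: drop_coord_def)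
        next
          case F: False
          then have "\<not> i - 1 < I" "Suc (i - 1) = i" using False by auto
          then show ?thesis using fun_cong[OF z(3), of "i - 1"] False by (simp add: drop_coord_def)
        qed
      qed
    qed
    moreover have "x I \<in> A" using x(1) assms(4) by blast
    ultimately show "x \<in> \<Omega>'" using assms(3) xc z(1) by blast
  qed
qed



context
  fixes d :: nat and Ks :: "real list list" and ps :: "nat list"
    and \<Omega> :: "nat \<Rightarrow> (nat \<Rightarrow> real) set" and I :: nat and e :: real
  assumes d2: "2 \<le> d" and lK: "length Ks = d" and lp: "length ps = d"
    and kv: "\<forall>i<d. 1 \<le> ps ! i \<and> open_knot_vector (ps ! i) (Ks ! i)"
    and hm: "hier_mesh d Ks \<Omega>"
    and Id: "I < d" and e01: "e = 0 \<or> e = 1"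
begin

abbreviation "TT k \<equiv> knots_lvl (Ks ! I) k"
abbreviation "pI \<equiv> ps ! I"

lemma good_i: "i < d \<Longrightarrow> good (ps ! i) (knots_lvl (Ks ! i) k)"
  using kv good_init good_lvl by blast

lemma goodI: "good pI (TT k)" using good_i Id by blast

definition "bi k = (if e = 0 then 0 else length (TT k) - Suc (Suc pI))"

lemma bi_lt: "bi k < nbsp (TT k) pI"
  using g_len[OF goodI[of k]] by (auto simp: bi_def nbsp_def)

lemma val_e: "j < nbsp (TT k) pI \<Longrightarrow> bspl (TT k) pI j e = (if j = bi k then 1 else 0)"
proof -
  assume j: "j < nbsp (TT k) pI"
  then have jl: "j + pI + 1 < length (TT k)" by (simp add: nbsp_def)
  show ?thesis
  proof (cases "e = 0")
    case True
    then show ?thesis using bspl_at0[OF goodI[of k] order.refl jl] unfolding bi_def by simp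
  next
    case False
    then have "e = 1" using e01 by simp
    then show ?thesis using bspl_at1[OF goodI[of k] order.refl jl] False unfolding bi_def by simp
  qed
qed

definition "Sk k = closure {t. bspl (TT k) pI (bi k) t \<noteq> 0}"

lemma e_in_S: "e \<in> Sk k"
proof -
  have "bspl (TT k) pI (bi k) e = 1" using val_e[OF bi_lt] by simp
  then show ?thesis unfolding Sk_def by (intro subsetD[OF closure_subset]) simp
qed

definition "Ak k = (if e = 0 then {0..TT k ! Suc pI} else {TT k ! (length (TT k) - Suc (Suc pI))..1})"

lemma S_sub_A: "Sk k \<subseteq> Ak k"
proof -
  have jl: "bi k + pI + 1 < length (TT k)" using bi_lt[of k] by (simp add: nbsp_def)
  have "{t. bspl (TT k) pI (bi k) t \<noteq> 0} \<subseteq> {TT k ! bi k .. TT k ! (bi k + pI + 1)}"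
    using bspl_zero_outside[OF g_sorted[OF goodI] jl] by force
  also have "\<dots> = Ak k"
  proof (cases "e = 0")
    case True
    then show ?thesis using g1[OF goodI[of k], of 0] unfolding Ak_def bi_def by simp
  next
    case False
    have b: "bi k = length (TT k) - Suc (Suc pI)" using False unfolding bi_def by simp
    have c: "bi k + pI + 1 = length (TT k) - 1" using b g_len[OF goodI[of k]] by simp
    have o: "TT k ! (length (TT k) - 1) = 1" using g3[OF goodI[of k], of "length (TT k) - 1"] g_len[OF goodI[of k]] by simp
    have "{TT k ! bi k..TT k ! (bi k + pI + 1)} = {TT k ! (length (TT k) - Suc (Suc pI))..1}"
      unfolding c unfolding o unfolding b ..
    then show ?thesis using False unfolding Ak_def by simp
  qed
  finally show ?thesis unfolding Sk_def by (rule closure_minimal) (simp add: Ak_def)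
qed

lemma A_mono: "m \<le> k \<Longrightarrow> Ak k \<subseteq> Ak m"
proof -
  assume mk: "m \<le> k"
  have sub: "set (TT m) \<subseteq> set (TT k)" by (rule set_lvl_mono[OF mk])
  show ?thesis
  proof (cases "e = 0")
    case True
    have "TT m ! Suc pI \<in> set (TT m)" using g_len[OF goodI[of m]] by simp
    then have "TT k ! Suc pI \<le> TT m ! Suc pI" using g5[OF goodI[of k]] g2[OF goodI[of m]] sub by blast
    then show ?thesis using True unfolding Ak_def by auto
  next
    case False
    have "TT m ! (length (TT m) - Suc (Suc pI)) \<in> set (TT m)" using g_len[OF goodI[of m]] by simp
    then have "TT m ! (length (TT m) - Suc (Suc pI)) \<le> TT k ! (length (TT k) - Suc (Suc pI))"
      using g6[OF goodI[of k]] g4[OF goodI[of m]] sub by blast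
    then show ?thesis using False unfolding Ak_def by auto
  qed
qed

lemma A_01: "Ak k \<subseteq> {0..1}"
  using g_nth[OF goodI[of k], of "Suc pI"] g_nth[OF goodI[of k], of "length (TT k) - Suc (Suc pI)"]
    g_len[OF goodI[of k]] unfolding Ak_def by auto

definition "Bk n = (case n of 0 \<Rightarrow> {0..1} | Suc m \<Rightarrow> Ak m)"

lemma Omega_mono: "m \<le> n \<Longrightarrow> \<Omega> n \<subseteq> \<Omega> m"
proof (induction n)
  case (Suc n)
  have "\<Omega> (Suc n) \<subseteq> \<Omega> n" using hm unfolding hier_mesh_def by blast
  then show ?case using Suc by (cases "m = Suc n") auto
qed simp

lemma Omega0: "\<Omega> 0 = unit_box d" using hm unfolding hier_mesh_def by blast

lemma Omega_carrier: "\<Omega> n \<subseteq> carrier_pts d"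
proof -
  have "unit_box d \<subseteq> carrier_pts d" unfolding unit_box_def by blast
  then show ?thesis using Omega_mono[of 0 n] Omega0 by simp
qed

lemma Omega_sat: "\<forall>x\<in>carrier_pts d. x(I := e) \<in> \<Omega> n \<and> x I \<in> Bk n \<longrightarrow> x \<in> \<Omega> n"
proof (cases n)
  case 0
  then have Om: "\<Omega> n = unit_box d" using Omega0 by simp
  show ?thesis
  proof (intro ballI impI)
    fix x assume x: "x \<in> carrier_pts d" "x(I := e) \<in> \<Omega> n \<and> x I \<in> Bk n"
    have xu: "x(I := e) \<in> unit_box d" using x(2) Om by simp
    have ub: "\<forall>i<d. 0 \<le> (x(I := e)) i \<and> (x(I := e)) i \<le> 1"
      using xu unfolding unit_box_def mem_Collect_eq by (elim conjE)
    have xI: "x I \<in> {0..1}" using x(2) 0 unfolding Bk_def by simp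
    have "\<forall>i<d. 0 \<le> x i \<and> x i \<le> 1"
    proof (intro allI impI)
      fix i assume "i < d"
      show "0 \<le> x i \<and> x i \<le> 1"
      proof (cases "i = I")
        case True then show ?thesis using xI by simp
      next
        case False
        then have "(x(I := e)) i = x i" by simp
        then show ?thesis using ub[rule_format, OF \<open>i < d\<close>] by simp
      qed
    qed
    then have "x \<in> unit_box d" using x(1) unfolding unit_box_def mem_Collect_eq by (intro conjI)
    then show "x \<in> \<Omega> n" using Om by simp
  qed
next
  case (Suc m)
  have "\<forall>k. \<exists>C \<subseteq> cells d Ks k. \<Omega> (Suc k) = \<Union>C"
    using hm[unfolded hier_mesh_def] by (elim conjE)
  then obtain C where C: "C \<subseteq> cells d Ks m" "\<Omega> (Suc m) = \<Union>C" by blast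
  show ?thesis
  proof (intro ballI impI)
    fix x assume x: "x \<in> carrier_pts d" "x(I := e) \<in> \<Omega> n \<and> x I \<in> Bk n"
    have "x(I := e) \<in> \<Union>C" using x Suc C(2) by simp
    then obtain c where c: "c \<in> C" "x(I := e) \<in> c" by blast
    have "c \<in> cells d Ks m" using c(1) C(1) by blast
    then have "\<exists>js. c = {x \<in> carrier_pts d. \<forall>i<d. knots_lvl (Ks ! i) m ! (js i) \<le> x i \<and>
                                 x i \<le> knots_lvl (Ks ! i) m ! (js i + 1)} \<and>
      (\<forall>i<d. js i + 1 < length (knots_lvl (Ks ! i) m) \<and>
              knots_lvl (Ks ! i) m ! (js i) < knots_lvl (Ks ! i) m ! (js i + 1))"
      unfolding cells_def by (simp only: mem_Collect_eq)
    then obtain js where js: "c = {x \<in> carrier_pts d. \<forall>i<d. knots_lvl (Ks ! i) m ! (js i) \<le> x i \<and>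
                                 x i \<le> knots_lvl (Ks ! i) m ! (js i + 1)}"
      "\<forall>i<d. js i + 1 < length (knots_lvl (Ks ! i) m) \<and>
              knots_lvl (Ks ! i) m ! (js i) < knots_lvl (Ks ! i) m ! (js i + 1)"
      by (elim exE conjE)
    have cc: "\<forall>i<d. knots_lvl (Ks ! i) m ! (js i) \<le> (x(I := e)) i \<and>
                                 (x(I := e)) i \<le> knots_lvl (Ks ! i) m ! (js i + 1)"
      using c(2) unfolding js(1) mem_Collect_eq by (elim conjE)
    have lo: "TT m ! js I \<le> e" "e \<le> TT m ! (js I + 1)" "TT m ! js I < TT m ! (js I + 1)"
      "js I + 1 < length (TT m)"
      using cc[rule_format, OF Id] js(2)[rule_format, OF Id] by simp_all
    have xA: "x I \<in> Ak m" using x Suc by (simp add: Bk_def)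
    have gm: "good pI (TT m)" by (rule goodI)
    have loI: "TT m ! js I \<le> x I \<and> x I \<le> TT m ! (js I + 1)"
    proof (cases "e = 0")
      case True
      have n0: "0 \<le> TT m ! js I" using g_nth[OF gm, of "js I"] lo by simp
      have "0 < TT m ! (js I + 1)" using n0 lo by simp
      then have "TT m ! Suc pI \<le> TT m ! (js I + 1)" using g5[OF gm] lo(4) by simp
      then show ?thesis using xA True lo n0 unfolding Ak_def by auto
    next
      case False
      then have e1: "e = 1" using e01 by simp
      have n1: "TT m ! (js I + 1) \<le> 1" using g_nth[OF gm, of "js I + 1"] lo by simp
      have "TT m ! js I < 1" using n1 lo by simp
      then have "TT m ! js I \<le> TT m ! (length (TT m) - Suc (Suc pI))" using g6[OF gm] lo(4) by simp
      then show ?thesis using xA False e1 lo n1 unfolding Ak_def by auto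
    qed
    have "x \<in> c"
      unfolding js(1)
    proof (rule CollectI, rule conjI)
      show "x \<in> carrier_pts d" by (rule x(1))
      show "\<forall>i<d. knots_lvl (Ks ! i) m ! js i \<le> x i \<and> x i \<le> knots_lvl (Ks ! i) m ! (js i + 1)"
      proof (intro allI impI)
        fix i assume "i < d"
        show "knots_lvl (Ks ! i) m ! js i \<le> x i \<and> x i \<le> knots_lvl (Ks ! i) m ! (js i + 1)"
        proof (cases "i = I")
          case True then show ?thesis using loI by simp
        next
          case False
          then show ?thesis using cc[rule_format, OF \<open>i < d\<close>] by simp
        qed
      qed
    qed
    then show "x \<in> \<Omega> n" using c(1) C(2) Suc by blast
  qed
qed

abbreviation "Ks' \<equiv> del_nth I Ks"
abbreviation "ps' \<equiv> del_nth I ps"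

lemma key:
  assumes "n \<le> Suc k" "js I = bi k"
  shows "supp d (tpf d Ks ps k js) \<subseteq> \<Omega> n \<longleftrightarrow> supp (d - 1) (tpf (d - 1) Ks' ps' k (js \<circ> sh I)) \<subseteq> restr_set I e (\<Omega> n)"
proof -
  have sp: "supp d (tpf d Ks ps k js) = {x. x I \<in> Sk k \<and> drop_coord I x \<in> supp (d - 1) (tpf (d - 1) Ks' ps' k (js \<circ> sh I))}"
  proof -
    have dec: "\<And>x. tpf d Ks ps k js x = bspl (TT k) pI (bi k) (x I) * tpf (d - 1) Ks' ps' k (js \<circ> sh I) (drop_coord I x)"
      using tpf_decomp[OF Id lK lp] assms(2) by simp
    show ?thesis using supp_split[OF Id, of "tpf d Ks ps k js" "bspl (TT k) pI (bi k)"
        "tpf (d - 1) Ks' ps' k (js \<circ> sh I)", OF dec] unfolding Sk_def .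
  qed
  have SB: "Sk k \<subseteq> Bk n"
  proof (cases n)
    case 0 then show ?thesis using S_sub_A[of k] A_01[of k] unfolding Bk_def by auto
  next
    case (Suc m) then have "m \<le> k" using assms by simp
    then show ?thesis using S_sub_A[of k] A_mono[of m k] Suc unfolding Bk_def by auto
  qed
  show ?thesis unfolding sp
    by (rule supp_equiv_abs[OF Id Omega_carrier Omega_sat SB e_in_S supp_carrier])
qed

end


context
  fixes d :: nat and Ks :: "real list list" and ps :: "nat list"
    and \<Omega> :: "nat \<Rightarrow> (nat \<Rightarrow> real) set" and I :: nat and e :: real
  assumes d2: "2 \<le> d" and lK: "length Ks = d" and lp: "length ps = d"
    and kv: "\<forall>i<d. 1 \<le> ps ! i \<and> open_knot_vector (ps ! i) (Ks ! i)"
    and hm: "hier_mesh d Ks \<Omega>"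
    and Id: "I < d" and e01: "e = 0 \<or> e = 1"
begin

abbreviation "bi' \<equiv> bi Ks ps I e"
abbreviation "KsE \<equiv> del_nth I Ks"
abbreviation "psE \<equiv> del_nth I ps"

lemmas key' = key[OF d2 lK lp kv hm Id e01]
lemmas val_e' = val_e[OF d2 lK lp kv hm Id e01]
lemmas bi_lt' = bi_lt[OF d2 lK lp kv hm Id e01]

lemma nbsp_sh: "i < d - 1 \<Longrightarrow> nbsp (knots_lvl (KsE ! i) k) (psE ! i) = nbsp (knots_lvl (Ks ! sh I i) k) (ps ! sh I i)"
  using del_nth_nth[of I Ks i] del_nth_nth[of I ps i] lK lp Id by simp

lemma restr_eq:
  assumes "\<forall>i<d. js i < nbsp (knots_lvl (Ks ! i) k) (ps ! i)"
  shows "restr_fun I e (tpf d Ks ps k js) = (if js I = bi' k then tpf (d - 1) KsE psE k (js \<circ> sh I) else (\<lambda>_. 0))"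
proof -
  have "js I < nbsp (knots_lvl (Ks ! I) k) (ps ! I)" using assms Id by blast
  then show ?thesis using restr_tpf[OF Id lK lp, of e k js] val_e'[of "js I" k] by (simp add: fun_eq_iff)
qed

lemma inH: "\<beta> \<in> hier_basis d Ks ps \<Omega> \<longleftrightarrow> (\<exists>k js. (\<forall>i<d. js i < nbsp (knots_lvl (Ks ! i) k) (ps ! i))
   \<and> \<beta> = tpf d Ks ps k js \<and> supp d \<beta> \<subseteq> \<Omega> k \<and> \<not> supp d \<beta> \<subseteq> \<Omega> (Suc k))"
  unfolding hier_basis_def bsplines_tpf by blast

lemma inHE: "\<gamma> \<in> hier_basis (d - 1) KsE psE (\<lambda>k. restr_set I e (\<Omega> k)) \<longleftrightarrow>
   (\<exists>k js'. (\<forall>i<d - 1. js' i < nbsp (knots_lvl (KsE ! i) k) (psE ! i))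
   \<and> \<gamma> = tpf (d - 1) KsE psE k js' \<and> supp (d - 1) \<gamma> \<subseteq> restr_set I e (\<Omega> k) \<and> \<not> supp (d - 1) \<gamma> \<subseteq> restr_set I e (\<Omega> (Suc k)))"
  unfolding hier_basis_def bsplines_tpf by blast

lemma part1a: "\<gamma> \<in> hier_basis (d - 1) KsE psE (\<lambda>k. restr_set I e (\<Omega> k)) \<Longrightarrow>
  \<exists>\<beta>. \<gamma> = restr_fun I e \<beta> \<and> \<beta> \<in> hier_basis d Ks ps \<Omega> \<and> restr_fun I e \<beta> \<noteq> (\<lambda>_. 0)"
proof -
  assume "\<gamma> \<in> hier_basis (d - 1) KsE psE (\<lambda>k. restr_set I e (\<Omega> k))"
  then obtain k js' where v': "\<forall>i<d - 1. js' i < nbsp (knots_lvl (KsE ! i) k) (psE ! i)"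
    and g: "\<gamma> = tpf (d - 1) KsE psE k js'" and s1: "supp (d - 1) \<gamma> \<subseteq> restr_set I e (\<Omega> k)"
    and s2: "\<not> supp (d - 1) \<gamma> \<subseteq> restr_set I e (\<Omega> (Suc k))"
    unfolding inHE by blast
  define js where "js = ext I (bi' k) js'"
  have jsI: "js I = bi' k" by (simp add: js_def ext_I)
  have jssh: "js \<circ> sh I = js'" by (simp add: js_def ext_sh)
  have v: "\<forall>i<d. js i < nbsp (knots_lvl (Ks ! i) k) (ps ! i)"
  proof (intro allI impI)
    fix i assume i: "i < d"
    show "js i < nbsp (knots_lvl (Ks ! i) k) (ps ! i)"
    proof (cases "i < I")
      case True
      then have "sh I i = i" "i < d - 1" using Id by (auto simp: sh_def)
      then show ?thesis using v'[rule_format, of i] nbsp_sh[of i k] True by (simp add: js_def ext_def)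
    next
      case False
      show ?thesis
      proof (cases "i = I")
        case True then show ?thesis using bi_lt'[of k] jsI by simp
      next
        case F: False
        then have "sh I (i - 1) = i" "i - 1 < d - 1" using False i by (auto simp: sh_def)
        then show ?thesis using v'[rule_format, of "i - 1"] nbsp_sh[of "i - 1" k] False F by (simp add: js_def ext_def)
      qed
    qed
  qed
  have r: "restr_fun I e (tpf d Ks ps k js) = \<gamma>" using restr_eq[OF v] jsI jssh g by simp
  have nz: "\<gamma> \<noteq> (\<lambda>_. 0)" using s2 supp_zero by auto
  have "supp d (tpf d Ks ps k js) \<subseteq> \<Omega> k" using key'[of k k js] jsI jssh s1 g by simp
  moreover have "\<not> supp d (tpf d Ks ps k js) \<subseteq> \<Omega> (Suc k)" using key'[of "Suc k" k js] jsI jssh s2 g by simp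
  ultimately have "tpf d Ks ps k js \<in> hier_basis d Ks ps \<Omega>" unfolding inH using v by blast
  then show ?thesis using r nz by metis
qed

lemma part1b: "\<beta> \<in> hier_basis d Ks ps \<Omega> \<Longrightarrow> restr_fun I e \<beta> \<noteq> (\<lambda>_. 0) \<Longrightarrow>
  restr_fun I e \<beta> \<in> hier_basis (d - 1) KsE psE (\<lambda>k. restr_set I e (\<Omega> k))"
proof -
  assume b: "\<beta> \<in> hier_basis d Ks ps \<Omega>" and nz: "restr_fun I e \<beta> \<noteq> (\<lambda>_. 0)"
  then obtain k js where v: "\<forall>i<d. js i < nbsp (knots_lvl (Ks ! i) k) (ps ! i)"
    and bd: "\<beta> = tpf d Ks ps k js" and s1: "supp d \<beta> \<subseteq> \<Omega> k" and s2: "\<not> supp d \<beta> \<subseteq> \<Omega> (Suc k)"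
    unfolding inH by blast
  have jsI: "js I = bi' k" using restr_eq[OF v] nz bd by (auto split: if_splits)
  have r: "restr_fun I e \<beta> = tpf (d - 1) KsE psE k (js \<circ> sh I)" using restr_eq[OF v] jsI bd by simp
  have v': "\<forall>i<d - 1. (js \<circ> sh I) i < nbsp (knots_lvl (KsE ! i) k) (psE ! i)"
    using v nbsp_sh sh_lt[OF Id] by simp
  have t1: "supp (d - 1) (tpf (d - 1) KsE psE k (js \<circ> sh I)) \<subseteq> restr_set I e (\<Omega> k)"
    using key'[of k k js] jsI s1 bd by simp
  have t2: "\<not> supp (d - 1) (tpf (d - 1) KsE psE k (js \<circ> sh I)) \<subseteq> restr_set I e (\<Omega> (Suc k))"
    using key'[of "Suc k" k js] jsI s2 bd by simp
  show ?thesis unfolding inHE r using v' t1 t2 by blast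
qed

lemma restr_set_mono: "A \<subseteq> B \<Longrightarrow> restr_set I e A \<subseteq> restr_set I e B"
  unfolding restr_set_def by blast

lemmas Omega_mono' = Omega_mono[OF d2 lK lp kv hm Id e01]

lemma part2_lt:
  assumes v1: "\<forall>i<d. js1 i < nbsp (knots_lvl (Ks ! i) k1) (ps ! i)" and j1: "js1 I = bi' k1"
    and s12: "\<not> supp d (tpf d Ks ps k1 js1) \<subseteq> \<Omega> (Suc k1)"
    and j2: "js2 I = bi' k2" and s21: "supp d (tpf d Ks ps k2 js2) \<subseteq> \<Omega> k2"
    and eq: "tpf (d - 1) KsE psE k1 (js1 \<circ> sh I) = tpf (d - 1) KsE psE k2 (js2 \<circ> sh I)"
    and lt: "k1 < k2"
  shows False
proof -
  have "supp (d - 1) (tpf (d - 1) KsE psE k2 (js2 \<circ> sh I)) \<subseteq> restr_set I e (\<Omega> k2)"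
    using key'[of k2 k2 js2] j2 s21 by simp
  also have "\<dots> \<subseteq> restr_set I e (\<Omega> (Suc k1))" using Omega_mono'[of "Suc k1" k2] lt restr_set_mono by simp
  finally have "supp d (tpf d Ks ps k1 js1) \<subseteq> \<Omega> (Suc k1)"
    using key'[of "Suc k1" k1 js1] j1 eq by simp
  then show False using s12 by simp
qed

lemma part2: "\<beta>1 \<in> hier_basis d Ks ps \<Omega> \<Longrightarrow> \<beta>2 \<in> hier_basis d Ks ps \<Omega> \<Longrightarrow> \<beta>1 \<noteq> \<beta>2 \<Longrightarrow>
   restr_fun I e \<beta>1 \<noteq> (\<lambda>_. 0) \<Longrightarrow> restr_fun I e \<beta>1 \<noteq> restr_fun I e \<beta>2"
proof
  assume b1: "\<beta>1 \<in> hier_basis d Ks ps \<Omega>" and b2: "\<beta>2 \<in> hier_basis d Ks ps \<Omega>" and ne: "\<beta>1 \<noteq> \<beta>2"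
    and nz: "restr_fun I e \<beta>1 \<noteq> (\<lambda>_. 0)" and eq: "restr_fun I e \<beta>1 = restr_fun I e \<beta>2"
  obtain k1 js1 where v1: "\<forall>i<d. js1 i < nbsp (knots_lvl (Ks ! i) k1) (ps ! i)"
    and bd1: "\<beta>1 = tpf d Ks ps k1 js1" and s11: "supp d \<beta>1 \<subseteq> \<Omega> k1" and s12: "\<not> supp d \<beta>1 \<subseteq> \<Omega> (Suc k1)"
    using b1 unfolding inH by blast
  obtain k2 js2 where v2: "\<forall>i<d. js2 i < nbsp (knots_lvl (Ks ! i) k2) (ps ! i)"
    and bd2: "\<beta>2 = tpf d Ks ps k2 js2" and s21: "supp d \<beta>2 \<subseteq> \<Omega> k2" and s22: "\<not> supp d \<beta>2 \<subseteq> \<Omega> (Suc k2)"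
    using b2 unfolding inH by blast
  have j1: "js1 I = bi' k1" using restr_eq[OF v1] nz bd1 by (auto split: if_splits)
  have nz2: "restr_fun I e \<beta>2 \<noteq> (\<lambda>_. 0)" using nz eq by simp
  have j2: "js2 I = bi' k2" using restr_eq[OF v2] nz2 bd2 by (auto split: if_splits)
  have geq: "tpf (d - 1) KsE psE k1 (js1 \<circ> sh I) = tpf (d - 1) KsE psE k2 (js2 \<circ> sh I)"
    using eq restr_eq[OF v1] restr_eq[OF v2] j1 j2 bd1 bd2 by simp
  show False
  proof (cases k1 k2 rule: linorder_cases)
    case less
    then show False using part2_lt[OF v1 j1 _ j2 _ geq] s12 s21 bd1 bd2 by blast
  next
    case greater
    then show False using part2_lt[OF v2 j2 _ j1 _ geq[symmetric]] s22 s11 bd1 bd2 by blast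
  next
    case equal
    have "\<beta>1 = \<beta>2"
    proof
      fix x
      show "\<beta>1 x = \<beta>2 x"
        using tpf_decomp[OF Id lK lp, of k1 js1 x] tpf_decomp[OF Id lK lp, of k2 js2 x] geq j1 j2 equal bd1 bd2
        by simp
    qed
    then show False using ne by simp
  qed
qed

end

theorem proposition3p1:
  fixes d :: nat and Ks :: "real list list" and ps :: "nat list"
    and \<Omega> :: "nat \<Rightarrow> (nat \<Rightarrow> real) set" and I :: nat and e :: real
  assumes "2 \<le> d" and "length Ks = d" and "length ps = d"
    and "\<forall>i<d. 1 \<le> ps ! i \<and> open_knot_vector (ps ! i) (Ks ! i)"
    and "hier_mesh d Ks \<Omega>"
    and "I < d" and "e = 0 \<or> e = 1"
  shows "hier_basis (d - 1) (del_nth I Ks) (del_nth I ps) (\<lambda>k. restr_set I e (\<Omega> k))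
           = {restr_fun I e \<beta> | \<beta>. \<beta> \<in> hier_basis d Ks ps \<Omega> \<and> restr_fun I e \<beta> \<noteq> (\<lambda>_. 0)}
       \<and> (\<forall>\<beta>1 \<in> hier_basis d Ks ps \<Omega>. \<forall>\<beta>2 \<in> hier_basis d Ks ps \<Omega>.
            \<beta>1 \<noteq> \<beta>2 \<and> restr_fun I e \<beta>1 \<noteq> (\<lambda>_. 0) \<longrightarrow> restr_fun I e \<beta>1 \<noteq> restr_fun I e \<beta>2)"
proof (intro conjI ballI impI)
  show "hier_basis (d - 1) (del_nth I Ks) (del_nth I ps) (\<lambda>k. restr_set I e (\<Omega> k))
           = {restr_fun I e \<beta> | \<beta>. \<beta> \<in> hier_basis d Ks ps \<Omega> \<and> restr_fun I e \<beta> \<noteq> (\<lambda>_. 0)}"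
  proof
    show "hier_basis (d - 1) (del_nth I Ks) (del_nth I ps) (\<lambda>k. restr_set I e (\<Omega> k))
           \<subseteq> {restr_fun I e \<beta> | \<beta>. \<beta> \<in> hier_basis d Ks ps \<Omega> \<and> restr_fun I e \<beta> \<noteq> (\<lambda>_. 0)}"
      using part1a[OF assms] by blast
    show "{restr_fun I e \<beta> | \<beta>. \<beta> \<in> hier_basis d Ks ps \<Omega> \<and> restr_fun I e \<beta> \<noteq> (\<lambda>_. 0)}
          \<subseteq> hier_basis (d - 1) (del_nth I Ks) (del_nth I ps) (\<lambda>k. restr_set I e (\<Omega> k))"
      using part1b[OF assms] by blast
  qed
next
  fix \<beta>1 \<beta>2 assume "\<beta>1 \<in> hier_basis d Ks ps \<Omega>" "\<beta>2 \<in> hier_basis d Ks ps \<Omega>"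
    "\<beta>1 \<noteq> \<beta>2 \<and> restr_fun I e \<beta>1 \<noteq> (\<lambda>_. 0)"
  then show "restr_fun I e \<beta>1 \<noteq> restr_fun I e \<beta>2" using part2[OF assms] by blast
qed


end
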